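(* Let $k, m \in \mathbb N$ be such that there exists a real linear map $\phi \colon \mathcal H_{2k}^0 \to M_m$ with $\phi(\mathcal{IH}_{2k}^0) \subset \mathcal U_m$. Then $m \ge 2k$.
   Context: $M_m$ is the set of $m\times m$ complex matrices, $\mathcal U_m$ the set of unitary ones, $\mathcal H_n^0$ the real vector space of trace-zero $n\times n$ complex hermitian matrices, and $\mathcal{IH}_n^0 = \mathcal H_n^0 \cap \mathcal U_n$. *)

theory Defs
  imports "HOL-Analysis.Analysis"
begin

definition cadj :: "complex^'n^'n \<Rightarrow> complex^'n^'n" where
  "cadj A = (\<chi> i j. cnj (A $ j $ i))"

definition unitary_mats :: "(complex^'n^'n) set" where
  "unitary_mats = {U. U ** cadj U = mat 1 \<and> cadj U ** U = mat 1}"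

definition herm0 :: "(complex^'n^'n) set" where
  "herm0 = {A. cadj A = A \<and> trace A = 0}"

definition iherm0 :: "(complex^'n^'n) set" where
  "iherm0 = herm0 \<inter> unitary_mats"

definition real_linear_on_herm0 :: "(complex^'n^'n \<Rightarrow> complex^'m^'m) \<Rightarrow> bool" where
  "real_linear_on_herm0 \<phi> \<longleftrightarrow>
     (\<forall>A\<in>herm0. \<forall>B\<in>herm0. \<phi> (A + B) = \<phi> A + \<phi> B) \<and>
     (\<forall>A\<in>herm0. \<forall>r::real. \<phi> (r *\<^sub>R A) = r *\<^sub>R \<phi> A)"

end

theory Submission
  imports Defs
begin

definition mmat :: "('n::finite \<Rightarrow> 'n) \<Rightarrow> ('n \<Rightarrow> complex) \<Rightarrow> complex^'n^'n" where
  "mmat p w = (\<chi> i j. if j = p i then w i else 0)"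

lemma mmat_mult: "mmat p w ** mmat q v = mmat (q \<circ> p) (\<lambda>i. w i * v (p i))"
proof -
  have "(\<Sum>l\<in>UNIV. (if l = p i then w i else 0) * (if j = q l then v l else 0)) =
        (if j = q (p i) then w i * v (p i) else 0)" for i j
    by (simp add: if_distrib[of "\<lambda>x. x * _"] cong: if_cong)
  then show ?thesis
    by (simp add: mmat_def matrix_matrix_mult_def vec_eq_iff)
qed

lemma cadj_mmat:
  assumes "\<And>x. p (p x) = x"
  shows "cadj (mmat p w) = mmat p (\<lambda>i. cnj (w (p i)))"
  unfolding cadj_def mmat_def vec_eq_iff using assms by auto

lemma mat1_mmat: "(mat 1 :: complex^'n^'n) = mmat id (\<lambda>_. 1)"
  by (simp add: mmat_def mat_def vec_eq_iff)

lemma trace_mmat: "trace (mmat p w) = (\<Sum>i\<in>UNIV. if p i = i then w i else 0)"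
  by (auto simp: trace_def mmat_def intro!: sum.cong)

lemma mmat_iherm0:
  assumes inv: "\<And>x. p (p x) = x" and cj: "\<And>i. w (p i) = cnj (w i)"
    and un: "\<And>i. w i * cnj (w i) = 1"
    and tr: "(\<Sum>i\<in>UNIV. if p i = i then w i else 0) = 0"
  shows "mmat p w \<in> iherm0"
proof -
  have h: "cadj (mmat p w) = mmat p w"
    using cadj_mmat[OF inv] cj by simp
  have "p \<circ> p = id" using inv by auto
  moreover have "(\<lambda>i. w i * w (p i)) = (\<lambda>_. 1)" using un cj by auto
  ultimately have u: "mmat p w ** mmat p w = mat 1"
    by (simp add: mmat_mult mat1_mmat)
  show ?thesis
    unfolding iherm0_def herm0_def unitary_mats_def using h u tr by (simp add: trace_mmat)
qed

lemma cadj_add: "cadj (A + B) = cadj A + cadj B"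
  by (simp add: cadj_def vec_eq_iff)
lemma cadj_scaleR: "cadj (r *\<^sub>R A) = r *\<^sub>R cadj A"
  by (simp add: cadj_def vec_eq_iff)
lemma cadj_uminus: "cadj (- A) = - cadj A"
  by (simp add: cadj_def vec_eq_iff)
lemma cadj_zero: "cadj 0 = 0"
  by (simp add: cadj_def vec_eq_iff)
lemma trace_scaleR: "trace (r *\<^sub>R (A::complex^'n^'n)) = r *\<^sub>R trace A"
  by (simp add: trace_def scaleR_sum_right)
lemma trace_uminus: "trace (- (A::complex^'n^'n)) = - trace A"
  by (simp add: trace_def sum_negf)

lemma herm0_add: "A \<in> herm0 \<Longrightarrow> B \<in> herm0 \<Longrightarrow> A + B \<in> herm0"
  by (simp add: herm0_def cadj_add trace_add)
lemma herm0_scaleR: "A \<in> herm0 \<Longrightarrow> r *\<^sub>R A \<in> herm0"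
  by (simp add: herm0_def cadj_scaleR trace_scaleR)
lemma herm0_uminus: "A \<in> herm0 \<Longrightarrow> - A \<in> herm0"
  by (simp add: herm0_def cadj_uminus trace_uminus)
lemma herm0_diff: "A \<in> herm0 \<Longrightarrow> B \<in> herm0 \<Longrightarrow> A - B \<in> herm0"
  using herm0_add[of A "- B"] herm0_uminus[of B] by simp
lemma herm0_zero: "0 \<in> herm0"
  by (simp add: herm0_def cadj_zero trace_def)
lemma herm0_sum: "(\<And>x. x \<in> S \<Longrightarrow> f x \<in> herm0) \<Longrightarrow> sum f S \<in> herm0"
  by (induction S rule: infinite_finite_induct) (auto simp: herm0_zero herm0_add)

definition adm :: "(complex^'n::finite^'n \<Rightarrow> complex^'m::finite^'m) \<Rightarrow> bool" where
  "adm \<phi> \<longleftrightarrow> real_linear_on_herm0 \<phi> \<and> \<phi> ` iherm0 \<subseteq> unitary_mats"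

lemma adm_add: "adm \<phi> \<Longrightarrow> A \<in> herm0 \<Longrightarrow> B \<in> herm0 \<Longrightarrow> \<phi> (A + B) = \<phi> A + \<phi> B"
  by (simp add: adm_def real_linear_on_herm0_def)
lemma adm_scaleR: "adm \<phi> \<Longrightarrow> A \<in> herm0 \<Longrightarrow> \<phi> (r *\<^sub>R A) = r *\<^sub>R \<phi> A"
  by (simp add: adm_def real_linear_on_herm0_def)
lemma adm_uminus: "adm \<phi> \<Longrightarrow> A \<in> herm0 \<Longrightarrow> \<phi> (- A) = - \<phi> A"
  using adm_scaleR[of \<phi> A "-1"] by simp
lemma adm_diff: "adm \<phi> \<Longrightarrow> A \<in> herm0 \<Longrightarrow> B \<in> herm0 \<Longrightarrow> \<phi> (A - B) = \<phi> A - \<phi> B"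
  using adm_add[of \<phi> A "- B"] adm_uminus[of \<phi> B] herm0_uminus[of B] by simp
lemma adm_zero: "adm \<phi> \<Longrightarrow> \<phi> 0 = 0"
  using adm_scaleR[of \<phi> 0 0] herm0_zero by simp
lemma adm_sum: "adm \<phi> \<Longrightarrow> (\<And>x. x \<in> S \<Longrightarrow> f x \<in> herm0) \<Longrightarrow> \<phi> (sum f S) = (\<Sum>x\<in>S. \<phi> (f x))"
proof (induction S rule: infinite_finite_induct)
  case (insert x F)
  then show ?case by (simp add: adm_add herm0_sum)
qed (auto simp: adm_zero)
lemma adm_unitary: "adm \<phi> \<Longrightarrow> A \<in> iherm0 \<Longrightarrow> \<phi> A \<in> unitary_mats"
  by (auto simp: adm_def)

definition Tc :: "(complex^'n::finite^'n \<Rightarrow> complex^'m::finite^'m) \<Rightarrow> 'm \<Rightarrow> complex^'n^'n \<Rightarrow> complex^'m" where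
  "Tc \<phi> j A = column j (\<phi> A)"

lemma Tc_add: "adm \<phi> \<Longrightarrow> A \<in> herm0 \<Longrightarrow> B \<in> herm0 \<Longrightarrow> Tc \<phi> j (A + B) = Tc \<phi> j A + Tc \<phi> j B"
  by (simp add: Tc_def adm_add column_def vec_eq_iff)
lemma Tc_scaleR: "adm \<phi> \<Longrightarrow> A \<in> herm0 \<Longrightarrow> Tc \<phi> j (r *\<^sub>R A) = r *\<^sub>R Tc \<phi> j A"
  by (simp add: Tc_def adm_scaleR column_def vec_eq_iff)
lemma Tc_uminus: "adm \<phi> \<Longrightarrow> A \<in> herm0 \<Longrightarrow> Tc \<phi> j (- A) = - Tc \<phi> j A"
  by (simp add: Tc_def adm_uminus column_def vec_eq_iff)
lemma Tc_diff: "adm \<phi> \<Longrightarrow> A \<in> herm0 \<Longrightarrow> B \<in> herm0 \<Longrightarrow> Tc \<phi> j (A - B) = Tc \<phi> j A - Tc \<phi> j B"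
  by (simp add: Tc_def adm_diff column_def vec_eq_iff)
lemma Tc_sum: "adm \<phi> \<Longrightarrow> (\<And>x. x \<in> S \<Longrightarrow> f x \<in> herm0) \<Longrightarrow> Tc \<phi> j (sum f S) = (\<Sum>x\<in>S. Tc \<phi> j (f x))"
  by (simp add: Tc_def adm_sum column_def vec_eq_iff sum_component)

lemma norm_sq_vec: "(norm (x::complex^'m::finite))\<^sup>2 = (\<Sum>i\<in>UNIV. (cmod (x$i))\<^sup>2)"
  by (simp add: norm_vec_def L2_set_def sum_nonneg)

lemma Tc_unit:
  assumes "adm \<phi>" "A \<in> iherm0"
  shows "norm (Tc \<phi> j A) = 1"
proof -
  let ?U = "\<phi> A"
  have "cadj ?U ** ?U = mat 1" using adm_unitary[OF assms] by (simp add: unitary_mats_def)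
  then have "(cadj ?U ** ?U)$j$j = 1" by (simp add: mat_def)
  then have "(\<Sum>i\<in>UNIV. cnj (?U$i$j) * ?U$i$j) = 1"
    by (simp add: matrix_matrix_mult_def cadj_def)
  moreover have "cnj (?U$i$j) * ?U$i$j = of_real ((cmod (?U$i$j))\<^sup>2)" for i
    using complex_norm_square[of "?U$i$j"] by (simp add: mult.commute)
  ultimately have "of_real (\<Sum>i\<in>UNIV. (cmod (?U$i$j))\<^sup>2) = (1::complex)"
    by simp
  then have "(\<Sum>i\<in>UNIV. (cmod (?U$i$j))\<^sup>2) = 1"
    using of_real_eq_1_iff by blast
  then have "(norm (Tc \<phi> j A))\<^sup>2 = 1"
    by (simp add: norm_sq_vec Tc_def column_def)
  then show ?thesis
    using norm_ge_zero[of "Tc \<phi> j A"] by (auto simp: power2_eq_1_iff)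
qed

definition dg :: "('n::finite \<Rightarrow> real) \<Rightarrow> complex^'n^'n" where
  "dg d = mmat id (\<lambda>i. complex_of_real (d i))"

lemma dg_add: "dg (\<lambda>x. d x + e x) = dg d + dg e"
  by (simp add: dg_def mmat_def vec_eq_iff)
lemma dg_diff: "dg (\<lambda>x. d x - e x) = dg d - dg e"
  by (simp add: dg_def mmat_def vec_eq_iff)
lemma dg_uminus: "dg (\<lambda>x. - d x) = - dg d"
  by (simp add: dg_def mmat_def vec_eq_iff)
lemma dg_scale: "dg (\<lambda>x. c * d x) = c *\<^sub>R dg d"
proof -
  have "complex_of_real (c * d i) = c *\<^sub>R complex_of_real (d i)" for i
    by (simp add: scaleR_conv_of_real)
  then show ?thesis by (simp add: dg_def mmat_def vec_eq_iff)
qed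
lemma dg_sum: "dg (\<lambda>x. \<Sum>y\<in>S. f y x) = (\<Sum>y\<in>S. dg (f y))"
  by (induction S rule: infinite_finite_induct)
     (auto simp: dg_def mmat_def vec_eq_iff sum_component)

lemma dg_herm0: "sum d UNIV = 0 \<Longrightarrow> dg d \<in> herm0"
  by (simp add: herm0_def dg_def cadj_mmat trace_mmat flip: of_real_sum)

lemma dg_iherm0:
  assumes "\<And>x. s x = 1 \<or> s x = -1" "sum s UNIV = 0"
  shows "dg s \<in> iherm0"
  unfolding dg_def
proof (rule mmat_iherm0)
  show "complex_of_real (s i) * cnj (complex_of_real (s i)) = 1" for i
    using assms(1)[of i] by auto
  show "(\<Sum>i\<in>UNIV. if id i = i then complex_of_real (s i) else 0) = 0"
    using assms(2) by (simp flip: of_real_sum)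
qed auto

definition ind :: "'n \<Rightarrow> 'n \<Rightarrow> real" where
  "ind a x = (if x = a then 1 else 0)"

lemma sum_ind [simp]: "sum (ind a) (UNIV::'n::finite set) = 1"
  by (simp add: ind_def)

definition Dab :: "'n::finite \<Rightarrow> 'n \<Rightarrow> complex^'n^'n" where
  "Dab a b = dg (\<lambda>x. ind a x - ind b x)"

lemma Dab_herm0: "Dab a b \<in> herm0"
  unfolding Dab_def by (rule dg_herm0) (simp add: sum_subtractf)

definition Bal :: "'n set \<Rightarrow> ('n \<Rightarrow> real) \<Rightarrow> bool" where
  "Bal S r \<longleftrightarrow> (\<forall>x\<in>S. r x = 0) \<and> (\<forall>x. x \<notin> S \<longrightarrow> r x = 1 \<or> r x = -1) \<and> sum r UNIV = 0"

lemma Bal_herm0: "Bal S r \<Longrightarrow> dg r \<in> herm0"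
  by (simp add: Bal_def dg_herm0)

lemma Bal_exists:
  fixes S :: "'n::finite set"
  assumes "even (CARD('n) - card S)"
  shows "\<exists>r. Bal S r"
proof -
  let ?C = "UNIV - S"
  have cC: "card ?C = CARD('n) - card S"
    by (simp add: card_Diff_subset)
  obtain H where H: "H \<subseteq> ?C" "card H = card ?C div 2" "finite H"
    using obtain_subset_with_card_n[of "card ?C div 2" ?C] by auto
  have le: "card S \<le> CARD('n)" by (rule card_mono) auto
  have cCH: "card (?C - H) = card ?C div 2"
    using H assms cC le by (simp add: card_Diff_subset) presburger
  define r where "r x = (if x \<in> H then 1 else 0) - (if x \<in> ?C - H then 1 else (0::real))" for x
  have "sum r UNIV = real (card H) - real (card (?C - H))"
    unfolding r_def by (simp add: sum_subtractf sum.If_cases set_diff_eq)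
  also have "\<dots> = 0" using H(2) cCH by simp
  finally have "sum r UNIV = 0" .
  moreover have "\<forall>x\<in>S. r x = 0" using H(1) by (auto simp: r_def)
  moreover have "\<forall>x. x \<notin> S \<longrightarrow> r x = 1 \<or> r x = -1" by (auto simp: r_def)
  ultimately show ?thesis unfolding Bal_def by blast
qed

lemma pm_lemma:
  fixes p q :: "'a::real_inner"
  assumes "norm (p + q) = 1" "norm (- p + q) = 1"
  shows "inner p q = 0" "(norm p)\<^sup>2 + (norm q)\<^sup>2 = 1"
proof -
  have e1: "inner (p + q) (p + q) = 1" using assms(1) by (simp add: power2_norm_eq_inner[symmetric])
  have e2: "inner (- p + q) (- p + q) = 1" using assms(2) by (simp add: power2_norm_eq_inner[symmetric])
  have "inner (p + q) (p + q) = inner p p + 2 * inner p q + inner q q"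
    by (simp add: inner_add_left inner_add_right inner_commute)
  moreover have "inner (- p + q) (- p + q) = inner p p - 2 * inner p q + inner q q"
    by (simp add: inner_add_left inner_add_right inner_diff_left inner_diff_right inner_commute)
  ultimately show "inner p q = 0" "(norm p)\<^sup>2 + (norm q)\<^sup>2 = 1"
    using e1 e2 by (auto simp: power2_norm_eq_inner)
qed

definition Nn :: "(complex^'n::finite^'n \<Rightarrow> complex^'m::finite^'m) \<Rightarrow> 'm \<Rightarrow> complex^'n^'n \<Rightarrow> real" where
  "Nn \<phi> j A = (norm (Tc \<phi> j A))\<^sup>2"

lemma Nn_uminus: "adm \<phi> \<Longrightarrow> A \<in> herm0 \<Longrightarrow> Nn \<phi> j (- A) = Nn \<phi> j A"
  by (simp add: Nn_def Tc_uminus)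

lemma pm_iherm0:
  assumes "adm \<phi>" "A \<in> herm0" "B \<in> herm0" "A + B \<in> iherm0" "- A + B \<in> iherm0"
  shows "inner (Tc \<phi> j A) (Tc \<phi> j B) = 0" "Nn \<phi> j A + Nn \<phi> j B = 1"
proof -
  have "norm (Tc \<phi> j A + Tc \<phi> j B) = 1"
    using Tc_unit[OF assms(1,4)] Tc_add[OF assms(1-3)] by simp
  moreover have "norm (- Tc \<phi> j A + Tc \<phi> j B) = 1"
    using Tc_unit[OF assms(1,5)] Tc_add[OF assms(1) herm0_uminus[OF assms(2)] assms(3)]
      Tc_uminus[OF assms(1,2)] by simp
  ultimately show "inner (Tc \<phi> j A) (Tc \<phi> j B) = 0" "Nn \<phi> j A + Nn \<phi> j B = 1"
    using pm_lemma unfolding Nn_def by blast+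
qed

lemma Bal_sign:
  assumes "Bal S r" "x \<notin> S" shows "r x = 1 \<or> r x = -1"
  using assms by (simp add: Bal_def)

lemma Bal_zero:
  assumes "Bal S r" "x \<in> S" shows "r x = 0"
  using assms by (simp add: Bal_def)

lemma Bal_sum: "Bal S r \<Longrightarrow> sum r UNIV = 0"
  by (simp add: Bal_def)

lemma key_D:
  assumes "adm \<phi>" "a \<noteq> b" "Bal {a,b} r"
  shows "inner (Tc \<phi> j (Dab a b)) (Tc \<phi> j (dg r)) = 0" "Nn \<phi> j (Dab a b) + Nn \<phi> j (dg r) = 1"
proof -
  have s1: "dg (\<lambda>x. (ind a x - ind b x) + r x) \<in> iherm0"
  proof (rule dg_iherm0)
    show "(ind a x - ind b x) + r x = 1 \<or> (ind a x - ind b x) + r x = -1" for x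
      using assms Bal_sign[OF assms(3), of x] Bal_zero[OF assms(3), of x] by (auto simp: ind_def)
    show "(\<Sum>x\<in>UNIV. (ind a x - ind b x) + r x) = 0"
      using Bal_sum[OF assms(3)] by (simp add: sum.distrib sum_subtractf)
  qed
  have s2: "dg (\<lambda>x. - (ind a x - ind b x) + r x) \<in> iherm0"
  proof (rule dg_iherm0)
    show "- (ind a x - ind b x) + r x = 1 \<or> - (ind a x - ind b x) + r x = -1" for x
      using assms Bal_sign[OF assms(3), of x] Bal_zero[OF assms(3), of x] by (auto simp: ind_def)
    show "(\<Sum>x\<in>UNIV. - (ind a x - ind b x) + r x) = 0"
      using Bal_sum[OF assms(3)] by (simp add: sum.distrib sum_subtractf sum_negf)
  qed
  have "Dab a b + dg r \<in> iherm0" using s1 by (simp add: dg_add Dab_def)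
  moreover have "- Dab a b + dg r = dg (\<lambda>x. - (ind a x - ind b x) + r x)"
    unfolding Dab_def by (simp add: dg_def mmat_def vec_eq_iff)
  then have "- Dab a b + dg r \<in> iherm0" using s2 by simp
  ultimately show "inner (Tc \<phi> j (Dab a b)) (Tc \<phi> j (dg r)) = 0" "Nn \<phi> j (Dab a b) + Nn \<phi> j (dg r) = 1"
    using pm_iherm0[OF assms(1) Dab_herm0 Bal_herm0[OF assms(3)]] by blast+
qed

definition sw :: "'n \<Rightarrow> 'n \<Rightarrow> 'n \<Rightarrow> 'n" where
  "sw a b x = (if x = a then b else if x = b then a else x)"

lemma sw_sw [simp]: "sw a b (sw a b x) = x"
  by (auto simp: sw_def)

definition Oab :: "'n::finite \<Rightarrow> 'n \<Rightarrow> complex \<Rightarrow> complex^'n^'n" where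
  "Oab a b l = mmat (sw a b) (\<lambda>x. if x = a then l else if x = b then cnj l else 0)"

lemma Oab_herm0: "a \<noteq> b \<Longrightarrow> Oab a b l \<in> herm0"
  unfolding herm0_def Oab_def
  by (auto simp: cadj_mmat trace_mmat sw_def intro!: arg_cong[where f="mmat _"] sum.neutral)

lemma Oab_uminus: "Oab a b (- l) = - Oab a b l"
  by (auto simp: Oab_def mmat_def vec_eq_iff)

lemma Oab_plus_Bal:
  assumes "a \<noteq> b" "Bal {a,b} r" "l * cnj l = 1"
  shows "Oab a b l + dg r \<in> iherm0"
proof -
  define w where "w x = (if x = a then l else if x = b then cnj l else complex_of_real (r x))" for x
  have eq: "Oab a b l + dg r = mmat (sw a b) w"
    using assms Bal_zero[OF assms(2)]
    by (auto simp: Oab_def dg_def mmat_def vec_eq_iff w_def sw_def)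
  have "mmat (sw a b) w \<in> iherm0"
  proof (rule mmat_iherm0)
    show "w (sw a b i) = cnj (w i)" for i
      using assms by (auto simp: w_def sw_def)
    show "w i * cnj (w i) = 1" for i
    proof -
      have "i \<noteq> a \<Longrightarrow> i \<noteq> b \<Longrightarrow> r i * r i = 1"
        using Bal_sign[OF assms(2), of i] by auto
      then show ?thesis using assms(3)
        by (auto simp: w_def mult.commute simp flip: of_real_mult)
    qed
    have "(\<Sum>i\<in>UNIV. if sw a b i = i then w i else 0) = (\<Sum>i\<in>UNIV. complex_of_real (r i))"
      using assms(1) Bal_zero[OF assms(2)] by (intro sum.cong) (auto simp: sw_def w_def)
    also have "\<dots> = 0" using Bal_sum[OF assms(2)] by (simp flip: of_real_sum)
    finally show "(\<Sum>i\<in>UNIV. if sw a b i = i then w i else 0) = 0" .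
  qed simp
  then show ?thesis using eq by simp
qed

lemma key_O:
  assumes "adm \<phi>" "a \<noteq> b" "Bal {a,b} r" "l * cnj l = 1"
  shows "Nn \<phi> j (Oab a b l) + Nn \<phi> j (dg r) = 1"
proof -
  have "- Oab a b l + dg r \<in> iherm0"
    using Oab_plus_Bal[OF assms(2,3), of "- l"] assms(4) by (simp add: Oab_uminus)
  then show ?thesis
    using pm_iherm0[OF assms(1) Oab_herm0[OF assms(2)] Bal_herm0[OF assms(3)]]
      Oab_plus_Bal[OF assms(2-4)] by blast
qed

lemma N_Oab:
  assumes "adm \<phi>" "a \<noteq> b" "Bal {a,b} r" "l * cnj l = 1"
  shows "Nn \<phi> j (Oab a b l) = Nn \<phi> j (Dab a b)"
proof -
  have "Nn \<phi> j (Oab a b l) + Nn \<phi> j (dg r) = 1" by (rule key_O[OF assms])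
  moreover have "Nn \<phi> j (Dab a b) + Nn \<phi> j (dg r) = 1" by (rule key_D(2)[OF assms(1-3)])
  ultimately show ?thesis by linarith
qed

subsection \<open>Four point identity\<close>

lemma Bal_ext:
  fixes a b :: "'n::finite"
  assumes "Bal S r" "a \<in> S" "b \<in> S" "a \<noteq> b" "e = 1 \<or> e = -1"
  shows "Bal (S - {a,b}) (\<lambda>x. e * (ind a x - ind b x) + r x)"
  unfolding Bal_def
proof (intro conjI allI ballI impI)
  show "e * (ind a x - ind b x) + r x = 0" if "x \<in> S - {a,b}" for x
    using that Bal_zero[OF assms(1)] by (auto simp: ind_def)
  show "e * (ind a x - ind b x) + r x = 1 \<or> e * (ind a x - ind b x) + r x = -1"
    if "x \<notin> S - {a,b}" for x
    using that assms Bal_zero[OF assms(1), of x] Bal_sign[OF assms(1), of x] by (auto simp: ind_def)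
  show "(\<Sum>x\<in>UNIV. e * (ind a x - ind b x) + r x) = 0"
    using Bal_sum[OF assms(1)] by (simp add: sum.distrib sum_subtractf sum_ind flip: sum_distrib_left)
qed

lemma Tc_ext:
  assumes "adm \<phi>" "Bal S r"
  shows "Tc \<phi> j (dg (\<lambda>x. e * (ind a x - ind b x) + r x)) = e *\<^sub>R Tc \<phi> j (Dab a b) + Tc \<phi> j (dg r)"
proof -
  have "dg (\<lambda>x. e * (ind a x - ind b x) + r x) = e *\<^sub>R Dab a b + dg r"
    by (simp add: dg_add dg_scale Dab_def)
  then show ?thesis
    using Tc_add[OF assms(1) herm0_scaleR[OF Dab_herm0] Bal_herm0[OF assms(2)]]
      Tc_scaleR[OF assms(1) Dab_herm0] by simp
qed

abbreviation cc :: "(complex^'n::finite^'n \<Rightarrow> complex^'m::finite^'m) \<Rightarrow> 'm \<Rightarrow> 'n \<Rightarrow> 'n \<Rightarrow> real" where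
  "cc \<phi> j a b \<equiv> Nn \<phi> j (Dab a b)"

lemma Dab_swap: "Dab b a = - Dab a b"
  by (simp add: Dab_def dg_def mmat_def vec_eq_iff)

lemma cc_sym: "adm \<phi> \<Longrightarrow> cc \<phi> j a b = cc \<phi> j b a"
  using Nn_uminus[OF _ Dab_herm0, of \<phi> j b a] by (simp only: Dab_swap[of a b])

lemma G4:
  assumes adm: "adm \<phi>" and dist: "a \<noteq> b" "a \<noteq> c" "a \<noteq> d" "b \<noteq> c" "b \<noteq> d" "c \<noteq> d"
    and r: "Bal {a,b,c,d} r"
  shows "cc \<phi> j a b + cc \<phi> j c d + Nn \<phi> j (dg r) = 1"
proof -
  let ?T = "Tc \<phi> j"
  have e1: "{a,b,c,d} - {c,d} = {a,b}" "{a,b,c,d} - {a,b} = {c,d}" using dist by auto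
  have b1: "Bal {a,b} (\<lambda>x. 1 * (ind c x - ind d x) + r x)"
    using Bal_ext[OF r, of c d 1] dist e1 by auto
  have b2: "Bal {c,d} (\<lambda>x. 1 * (ind a x - ind b x) + r x)"
    using Bal_ext[OF r, of a b 1] dist e1 by auto
  have b3: "Bal {c,d} (\<lambda>x. (-1) * (ind a x - ind b x) + r x)"
    using Bal_ext[OF r, of a b "-1"] dist e1 by auto
  have h1: "cc \<phi> j a b + Nn \<phi> j (dg (\<lambda>x. 1 * (ind c x - ind d x) + r x)) = 1"
    by (rule key_D(2)[OF adm dist(1) b1])
  have h2: "inner (?T (Dab c d)) (?T (dg (\<lambda>x. 1 * (ind a x - ind b x) + r x))) = 0"
    by (rule key_D(1)[OF adm dist(6) b2])
  have h3: "inner (?T (Dab c d)) (?T (dg (\<lambda>x. (-1) * (ind a x - ind b x) + r x))) = 0"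
    by (rule key_D(1)[OF adm dist(6) b3])
  have "inner (?T (Dab c d)) (?T (dg r)) = 0"
    using h2 h3 unfolding Tc_ext[OF adm r] by (simp add: inner_add_right inner_diff_right)
  then have "Nn \<phi> j (dg (\<lambda>x. 1 * (ind c x - ind d x) + r x)) = cc \<phi> j c d + Nn \<phi> j (dg r)"
    unfolding Nn_def Tc_ext[OF adm r] 
    by (simp add: power2_norm_eq_inner inner_add_left inner_add_right inner_commute)
  then show ?thesis using h1 by simp
qed

lemma four_point:
  assumes adm: "adm \<phi>" and ev: "even CARD('n)" and dist: "a \<noteq> b" "a \<noteq> c" "a \<noteq> d" "b \<noteq> c" "b \<noteq> d" "c \<noteq> d"
    and n4: "4 \<le> CARD('n)"
  shows "cc \<phi> j (a::'n::finite) b + cc \<phi> j c d = cc \<phi> j a c + cc \<phi> j b d"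
proof -
  have "card {a,b,c,d} = 4" using dist by auto
  then have "even (CARD('n) - card {a,b,c,d})" using ev n4 by simp
  then obtain r where r: "Bal {a,b,c,d} r" using Bal_exists by blast
  have r': "Bal {a,c,b,d} r" using r by (simp add: insert_commute)
  have "cc \<phi> j a b + cc \<phi> j c d + Nn \<phi> j (dg r) = 1"
    by (rule G4[OF adm dist r])
  moreover have "cc \<phi> j a c + cc \<phi> j b d + Nn \<phi> j (dg r) = 1"
    by (rule G4[OF adm]) (use dist r' in auto)
  ultimately show ?thesis by linarith
qed

lemma ex_not_in:
  fixes S :: "'n::finite set"
  assumes "card S < CARD('n)" shows "\<exists>x. x \<notin> S"
proof (rule ccontr)
  assume "\<not> (\<exists>x. x \<notin> S)"
  then have "S = UNIV" by auto
  then show False using assms by simp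
qed

lemma three_distinct:
  assumes "3 \<le> CARD('n::finite)"
  obtains p q r :: "'n::finite" where "p \<noteq> q" "p \<noteq> r" "q \<noteq> r"
proof -
  obtain p :: 'n where True by simp
  obtain q where q: "q \<notin> {p}" using ex_not_in[of "{p}"] assms by auto
  have "card {p,q} = 2" using q by auto
  then obtain r where r: "r \<notin> {p,q}" using ex_not_in[of "{p,q}"] assms by auto
  show ?thesis using q r that by auto
qed

lemma mu_exists:
  assumes adm: "adm \<phi>" and ev: "even CARD('n)" and n4: "4 \<le> CARD('n::finite)"
  shows "\<exists>\<mu>. \<forall>a b::'n. a \<noteq> b \<longrightarrow> cc \<phi> j a b = \<mu> a + \<mu> b"
proof -
  let ?c = "cc \<phi> j"
  obtain p q r :: 'n where d: "p \<noteq> q" "p \<noteq> r" "q \<noteq> r"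
  proof -
    have "3 \<le> CARD('n)" using n4 by simp
    then show ?thesis using three_distinct that by blast
  qed
  have sym: "?c x y = ?c y x" for x y using cc_sym[OF adm] by blast
  have fp: "?c x y + ?c z w = ?c x z + ?c y w"
    if "x \<noteq> y" "x \<noteq> z" "x \<noteq> w" "y \<noteq> z" "y \<noteq> w" "z \<noteq> w" for x y z w
    using four_point[OF adm ev that n4] .
  define \<mu> where "\<mu> x = (if x = p then (?c p q + ?c p r - ?c q r)/2
      else if x = q then (?c p q + ?c q r - ?c p r)/2 else (?c x p + ?c x q - ?c p q)/2)" for x
  have H: "?c a b = \<mu> a + \<mu> b" if ab: "a \<noteq> b" and b: "b \<noteq> p" "b \<noteq> q" for a b
  proof (cases "a = p")
    case True
    show ?thesis
    proof (cases "b = r")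
      case True
      then show ?thesis using \<open>a = p\<close> d sym[of r p] sym[of r q] by (simp add: \<mu>_def field_simps)
    next
      case False
      have "?c p r + ?c b q = ?c p b + ?c r q" using fp[of p r b q] d b False by auto
      then show ?thesis using \<open>a = p\<close> d b sym[of r q] sym[of b p] by (simp add: \<mu>_def field_simps)
    qed
  next
    case ap: False
    show ?thesis
    proof (cases "a = q")
      case True
      show ?thesis
      proof (cases "b = r")
        case True
        then show ?thesis using \<open>a = q\<close> d sym[of r p] sym[of r q] by (simp add: \<mu>_def field_simps)
      next
        case False
        have "?c q r + ?c b p = ?c q b + ?c r p" using fp[of q r b p] d b False by auto
        then show ?thesis using \<open>a = q\<close> d b sym[of r p] sym[of b q] by (simp add: \<mu>_def field_simps)
      qed
    next
      case aq: False
      have "?c a b + ?c p q = ?c a p + ?c b q" using fp[of a b p q] d b ab ap aq by auto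
      moreover have "?c a b + ?c q p = ?c a q + ?c b p" using fp[of a b q p] d b ab ap aq by auto
      ultimately show ?thesis using ap aq b d sym[of q p] by (simp add: \<mu>_def field_simps)
    qed
  qed
  have "?c a b = \<mu> a + \<mu> b" if "a \<noteq> b" for a b
  proof (cases "b \<noteq> p \<and> b \<noteq> q")
    case True then show ?thesis using H that by blast
  next
    case False
    show ?thesis
    proof (cases "a \<noteq> p \<and> a \<noteq> q")
      case True then show ?thesis using H[of b a] that sym[of a b] by auto
    next
      case False
      then have "(a = p \<and> b = q) \<or> (a = q \<and> b = p)" using \<open>\<not> (b \<noteq> p \<and> b \<noteq> q)\<close> that by auto
      then show ?thesis using d sym[of q p] by (auto simp: \<mu>_def field_simps)
    qed
  qed
  then show ?thesis by blast
qed

subsection \<open>The quadratic form on diagonal matrices\<close>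

lemma dg_decomp:
  fixes d :: "'n::finite \<Rightarrow> real"
  assumes "sum d UNIV = 0"
  shows "dg d = (\<Sum>x\<in>UNIV - {z}. d x *\<^sub>R Dab x z)"
proof -
  have sz: "(\<Sum>x\<in>UNIV - {z}. d x) = - d z"
    using assms sum.remove[of UNIV z d] by simp
  have "d i = (\<Sum>x\<in>UNIV - {z}. d x * (ind x i - ind z i))" for i
  proof -
    have "(\<Sum>x\<in>UNIV - {z}. d x * (ind x i - ind z i)) =
          (\<Sum>x\<in>UNIV - {z}. d x * ind x i) - ind z i * (\<Sum>x\<in>UNIV - {z}. d x)"
      by (simp add: right_diff_distrib sum_subtractf sum_distrib_left mult.commute)
    also have "(\<Sum>x\<in>UNIV - {z}. d x * ind x i) = (if i = z then 0 else d i)"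
      by (simp add: ind_def eq_commute[of _ i] if_distrib[of "\<lambda>t. d _ * t"] cong: if_cong)
    finally show ?thesis using sz by (auto simp: ind_def)
  qed
  then have "d = (\<lambda>i. \<Sum>x\<in>UNIV - {z}. d x * (ind x i - ind z i))"
    by (rule ext)
  then have "dg d = dg (\<lambda>i. \<Sum>x\<in>UNIV - {z}. d x * (ind x i - ind z i))"
    by (rule arg_cong)
  also have "\<dots> = (\<Sum>x\<in>UNIV - {z}. d x *\<^sub>R Dab x z)"
    by (simp add: dg_sum dg_scale Dab_def)
  finally show ?thesis .
qed

lemma inner_sum_sum:
  fixes v :: "'b \<Rightarrow> 'a::real_inner"
  shows "inner (\<Sum>x\<in>A. c x *\<^sub>R v x) (\<Sum>y\<in>A. c y *\<^sub>R v y) = (\<Sum>x\<in>A. \<Sum>y\<in>A. c x * c y * inner (v x) (v y))"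
  apply (simp add: inner_sum_left inner_sum_right sum_distrib_left mult.assoc)
  apply (subst sum.swap)
  apply (simp add: inner_commute mult.left_commute)
  done

lemma Q_formula:
  fixes d :: "'n::finite \<Rightarrow> real"
  assumes adm: "adm \<phi>" and mu: "\<forall>a b::'n. a \<noteq> b \<longrightarrow> cc \<phi> j a b = \<mu> a + \<mu> b"
    and sd: "sum d UNIV = 0"
  shows "Nn \<phi> j (dg d) = (\<Sum>x\<in>UNIV. \<mu> x * (d x)\<^sup>2)"
proof -
  obtain z :: 'n where True by simp
  let ?T = "Tc \<phi> j"
  let ?R = "UNIV - {z}"
  have Tdg: "?T (dg d) = (\<Sum>x\<in>?R. d x *\<^sub>R ?T (Dab x z))"
    unfolding dg_decomp[OF sd, of z]
    by (simp add: Tc_sum[OF adm] herm0_scaleR Dab_herm0 Tc_scaleR[OF adm Dab_herm0])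
  have inn: "inner (?T (Dab x z)) (?T (Dab y z)) = \<mu> z + (if x = y then \<mu> x else 0)"
    if "x \<in> ?R" "y \<in> ?R" for x y
  proof (cases "x = y")
    case True
    then show ?thesis using that mu by (simp add: Nn_def power2_norm_eq_inner[symmetric])
  next
    case False
    have "Dab x y = Dab x z - Dab y z" by (simp add: Dab_def dg_def mmat_def vec_eq_iff ind_def)
    then have "?T (Dab x y) = ?T (Dab x z) - ?T (Dab y z)"
      using Tc_diff[OF adm Dab_herm0 Dab_herm0] by simp
    then have "cc \<phi> j x y = cc \<phi> j x z + cc \<phi> j y z - 2 * inner (?T (Dab x z)) (?T (Dab y z))"
      unfolding Nn_def by (simp add: power2_norm_eq_inner inner_diff_left inner_diff_right inner_commute)
    then show ?thesis using mu False that by auto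
  qed
  have s1: "Nn \<phi> j (dg d) = (\<Sum>x\<in>?R. \<Sum>y\<in>?R. d x * d y * inner (?T (Dab x z)) (?T (Dab y z)))"
    unfolding Nn_def Tdg power2_norm_eq_inner by (rule inner_sum_sum)
  have s2: "(\<Sum>x\<in>?R. \<Sum>y\<in>?R. d x * d y * inner (?T (Dab x z)) (?T (Dab y z))) =
      (\<Sum>x\<in>?R. \<Sum>y\<in>?R. d x * d y * \<mu> z + (if x = y then d x * d x * \<mu> x else 0))"
    by (intro sum.cong refl) (simp add: inn distrib_left)
  have s3: "(\<Sum>x\<in>?R. \<Sum>y\<in>?R. d x * d y * \<mu> z + (if x = y then d x * d x * \<mu> x else 0)) =
     (\<Sum>x\<in>?R. \<Sum>y\<in>?R. d x * d y * \<mu> z) + (\<Sum>x\<in>?R. \<Sum>y\<in>?R. (if x = y then d x * d x * \<mu> x else 0))"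
    by (simp only: sum.distrib)
  have s4: "(\<Sum>x\<in>?R. \<Sum>y\<in>?R. (if x = y then d x * d x * \<mu> x else 0)) = (\<Sum>x\<in>?R. \<mu> x * (d x)\<^sup>2)"
    by (intro sum.cong refl) (simp add: power2_eq_square)
  have s5: "(\<Sum>x\<in>?R. \<Sum>y\<in>?R. d x * d y * \<mu> z) = \<mu> z * ((\<Sum>x\<in>?R. d x) * (\<Sum>y\<in>?R. d y))"
  proof -
    have "(\<Sum>x\<in>?R. \<Sum>y\<in>?R. d x * d y * \<mu> z) = \<mu> z * (\<Sum>x\<in>?R. \<Sum>y\<in>?R. d x * d y)"
      by (simp add: sum_distrib_left mult_ac)
    then show ?thesis by (simp add: sum_product)
  qed
  have s6: "(\<Sum>x\<in>?R. d x) = - d z" using sd sum.remove[of UNIV z d] by simp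
  have s7: "(\<Sum>x\<in>UNIV. \<mu> x * (d x)\<^sup>2) = \<mu> z * (d z)\<^sup>2 + (\<Sum>x\<in>?R. \<mu> x * (d x)\<^sup>2)"
    using sum.remove[of UNIV z "\<lambda>x. \<mu> x * (d x)\<^sup>2"] by simp
  show ?thesis
    unfolding s1 s2 s3 s4 s5 s6 s7 by (simp add: power2_eq_square)
qed

definition Xm :: "'n::finite \<Rightarrow> complex^'n^'n" where
  "Xm x = dg (\<lambda>y. real CARD('n) * ind x y - 1)"

lemma Xm_herm0: "Xm x \<in> herm0"
  unfolding Xm_def by (rule dg_herm0) (simp add: sum_subtractf flip: sum_distrib_left)

lemma struct:
  assumes adm: "adm \<phi>" and ev: "even CARD('n)" and n4: "4 \<le> CARD('n::finite)"
  shows "\<exists>\<mu>. (\<forall>a b::'n. a \<noteq> b \<longrightarrow> cc \<phi> j a b = \<mu> a + \<mu> b) \<and> sum \<mu> UNIV = 1 \<and>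
     (\<forall>x. Nn \<phi> j (Xm x) = ((real CARD('n) - 1)\<^sup>2 - 1) * \<mu> x + 1)"
proof -
  obtain \<mu> where mu: "\<forall>a b::'n. a \<noteq> b \<longrightarrow> cc \<phi> j a b = \<mu> a + \<mu> b"
    using mu_exists[OF adm ev n4] by blast
  obtain s :: "'n \<Rightarrow> real" where s: "Bal {} s" using Bal_exists[of "{}::'n set"] ev by auto
  have "dg s \<in> iherm0"
    using s by (intro dg_iherm0) (auto simp: Bal_def)
  then have "Nn \<phi> j (dg s) = 1" using Tc_unit[OF adm] by (simp add: Nn_def)
  moreover have "Nn \<phi> j (dg s) = (\<Sum>x\<in>UNIV. \<mu> x * (s x)\<^sup>2)"
    by (rule Q_formula[OF adm mu Bal_sum[OF s]])
  moreover have "(s x)\<^sup>2 = 1" for x using Bal_sign[OF s, of x] by auto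
  ultimately have sum1: "sum \<mu> UNIV = 1" by simp
  have "Nn \<phi> j (Xm x) = ((real CARD('n) - 1)\<^sup>2 - 1) * \<mu> x + 1" for x
  proof -
    have "Nn \<phi> j (Xm x) = (\<Sum>y\<in>UNIV. \<mu> y * (real CARD('n) * ind x y - 1)\<^sup>2)"
      unfolding Xm_def by (rule Q_formula[OF adm mu]) (simp add: sum_subtractf flip: sum_distrib_left)
    also have "\<dots> = (\<Sum>y\<in>UNIV. \<mu> y + (if y = x then ((real CARD('n) - 1)\<^sup>2 - 1) * \<mu> x else 0))"
      by (intro sum.cong refl) (auto simp: ind_def algebra_simps)
    also have "\<dots> = ((real CARD('n) - 1)\<^sup>2 - 1) * \<mu> x + 1"
      using sum1 by (simp add: sum.distrib)
    finally show ?thesis .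
  qed
  then show ?thesis using mu sum1 by blast
qed

subsection \<open>Frame changes\<close>

definition outer :: "complex^'n::finite \<Rightarrow> complex^'n \<Rightarrow> complex^'n^'n" where
  "outer x y = (\<chi> i j. x$i * cnj (y$j))"

definition Osym :: "complex^'n::finite \<Rightarrow> complex^'n \<Rightarrow> complex^'n^'n" where
  "Osym x y = outer x y + outer y x"

lemma cadj_mult: "cadj (A ** B) = cadj B ** cadj (A::complex^'n::finite^'n)"
  by (simp add: cadj_def matrix_matrix_mult_def vec_eq_iff mult.commute)

lemma cadj_cadj [simp]: "cadj (cadj A) = A"
  by (simp add: cadj_def vec_eq_iff)

lemma cadj_mat1 [simp]: "cadj (mat 1 :: complex^'n::finite^'n) = mat 1"
  by (simp add: cadj_def mat_def vec_eq_iff)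

lemma mat_add_rdistrib: "(A + B) ** C = A ** C + B ** (C::complex^'n::finite^'n)"
  by (simp add: matrix_matrix_mult_def vec_eq_iff sum.distrib distrib_right)

lemma mat_scaleR_left: "(r *\<^sub>R A) ** B = r *\<^sub>R (A ** (B::complex^'n::finite^'n))"
  by (simp add: matrix_matrix_mult_def vec_eq_iff scaleR_sum_right)

lemma mat_scaleR_right: "A ** (r *\<^sub>R B) = r *\<^sub>R (A ** (B::complex^'n::finite^'n))"
  by (simp add: matrix_matrix_mult_def vec_eq_iff scaleR_sum_right)

lemma mult_outer_left: "U ** outer x y = outer (U *v x) y"
  by (simp add: outer_def matrix_matrix_mult_def matrix_vector_mult_def vec_eq_iff sum_distrib_right mult.assoc)

lemma mult_outer_right: "outer x y ** V = outer x (cadj V *v y)"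
  by (simp add: outer_def matrix_matrix_mult_def matrix_vector_mult_def vec_eq_iff cadj_def
      sum_distrib_left mult_ac)

lemma sandwich_outer: "cadj U = U \<Longrightarrow> U ** outer x y ** U = outer (U *v x) (U *v y)"
  by (simp add: mult_outer_left mult_outer_right)

lemma sandwich_Osym: "cadj U = U \<Longrightarrow> U ** Osym x y ** U = Osym (U *v x) (U *v y)"
  by (simp add: Osym_def matrix_add_ldistrib mat_add_rdistrib sandwich_outer)

lemma conj_herm0:
  assumes "cadj U = U" "U ** U = mat 1" "A \<in> herm0"
  shows "U ** A ** U \<in> herm0"
proof -
  have "cadj (U ** A ** U) = U ** A ** U"
    using assms by (simp add: cadj_mult herm0_def matrix_mul_assoc)
  moreover have "trace (U ** A ** U) = trace A"
    using assms by (metis matrix_mul_assoc matrix_mul_lid trace_mul_sym)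
  ultimately show ?thesis using assms by (simp add: herm0_def)
qed

lemma conj_iherm0:
  assumes "cadj U = U" "U ** U = mat 1" "A \<in> iherm0"
  shows "U ** A ** U \<in> iherm0"
proof -
  have h: "U ** A ** U \<in> herm0" using conj_herm0 assms by (auto simp: iherm0_def)
  have A: "A ** cadj A = mat 1" "cadj A ** A = mat 1" using assms(3) by (auto simp: iherm0_def unitary_mats_def)
  have "(U ** A ** U) ** cadj (U ** A ** U) = mat 1"
    using assms(1,2) A by (simp add: cadj_mult matrix_mul_assoc)
       (metis matrix_mul_assoc matrix_mul_lid)
  moreover have "cadj (U ** A ** U) ** (U ** A ** U) = mat 1"
    using assms(1,2) A by (simp add: cadj_mult matrix_mul_assoc)
       (metis matrix_mul_assoc matrix_mul_lid)
  ultimately show ?thesis using h by (simp add: iherm0_def unitary_mats_def)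
qed

lemma adm_conj:
  fixes U :: "complex^'n::finite^'n" and \<phi> :: "complex^'n^'n \<Rightarrow> complex^'m::finite^'m"
  assumes "adm \<phi>" "cadj U = U" "U ** U = mat 1"
  shows "adm (\<lambda>A. \<phi> (U ** A ** U))"
  unfolding adm_def real_linear_on_herm0_def
proof (intro conjI ballI allI subsetI)
  fix A B :: "complex^'n^'n" assume "A \<in> herm0" "B \<in> herm0"
  then show "\<phi> (U ** (A + B) ** U) = \<phi> (U ** A ** U) + \<phi> (U ** B ** U)"
    using adm_add[OF assms(1)] conj_herm0[OF assms(2,3)]
    by (simp add: matrix_add_ldistrib mat_add_rdistrib)
next
  fix A :: "complex^'n^'n" and r :: real assume "A \<in> herm0"
  moreover have "U ** (r *\<^sub>R A) ** U = r *\<^sub>R (U ** A ** U)"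
    by (simp add: mat_scaleR_left mat_scaleR_right)
  ultimately show "\<phi> (U ** (r *\<^sub>R A) ** U) = r *\<^sub>R \<phi> (U ** A ** U)"
    using adm_scaleR[OF assms(1)] conj_herm0[OF assms(2,3)] by simp
next
  fix X assume "X \<in> (\<lambda>A. \<phi> (U ** A ** U)) ` iherm0"
  then show "X \<in> unitary_mats"
    using adm_unitary[OF assms(1)] conj_iherm0[OF assms(2,3)] by auto
qed

lemma mat_axis: "(M *v axis a 1)$i = (M::complex^'n::finite^'n)$i$a"
proof -
  have "(\<Sum>j\<in>UNIV. M$i$j * (if j = a then 1 else 0)) = (\<Sum>j\<in>UNIV. if j = a then M$i$a else 0)"
    by (intro sum.cong) auto
  then show ?thesis by (simp add: matrix_vector_mult_def axis_def)
qed

lemma sum4: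
  fixes A B C D :: "'a \<Rightarrow> complex"
  shows "(\<Sum>k\<in>S. (A k - B k) * (C k - D k)) =
    (\<Sum>k\<in>S. A k * C k) - (\<Sum>k\<in>S. A k * D k) - (\<Sum>k\<in>S. B k * C k) + (\<Sum>k\<in>S. B k * D k)"
  by (simp add: algebra_simps sum.distrib sum_subtractf)

lemma householder:
  fixes w :: "complex^'n::finite" and a b :: 'n
  assumes nw: "norm w = 1" and wa: "w$a = 0" and ab: "a \<noteq> b"
  obtains U l where "cadj U = U" "U ** U = mat 1" "U *v axis a 1 = axis a 1"
    "U *v (cnj l *s axis b 1) = w" "l * cnj l = 1"
proof -
  define l where "l = (if w$b = 0 then 1 else cnj (w$b) / of_real (cmod (w$b)))"
  have l1: "l * cnj l = 1"
  proof (cases "w$b = 0")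
    case False
    have e: "cnj (w$b) * w$b = of_real (cmod (w$b)) * of_real (cmod (w$b))"
      using complex_norm_square[of "w$b"] by (simp add: power2_eq_square mult.commute)
    have "l * cnj l = (cnj (w$b) * w$b) / (of_real (cmod (w$b)) * of_real (cmod (w$b)))"
      using False by (simp add: l_def)
    also have "\<dots> = 1" using False e by simp
    finally show ?thesis .
  qed (simp add: l_def)
  have cl: "cmod l = 1"
  proof -
    have "complex_of_real ((cmod l)\<^sup>2) = 1" using l1 complex_norm_square[of l] by simp
    then have "(cmod l)\<^sup>2 = 1" using of_real_eq_1_iff by blast
    then show ?thesis using norm_ge_zero[of l] by (auto simp: power2_eq_1_iff)
  qed
  have lb: "l * w$b = of_real (cmod (w$b))"
  proof (cases "w$b = 0")
    case False
    then have "cnj (w$b) * w$b = of_real ((cmod (w$b))\<^sup>2)"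
      using complex_norm_square[of "w$b"] by (simp add: mult.commute)
    then show ?thesis using False
      by (simp add: l_def power2_eq_square field_simps)
  qed (simp add: l_def)
  define y where "y = l *s w"
  define v where "v = axis b 1 - y"
  define t where "t = (\<Sum>i\<in>UNIV. (cmod (v$i))\<^sup>2)"
  define c where "c = 2 / t"
  define U where "U = (\<chi> i j. (if i = j then 1 else 0) - of_real c * v$i * cnj (v$j))"
  have sw: "(\<Sum>i\<in>UNIV. (cmod (w$i))\<^sup>2) = 1" using nw norm_sq_vec[of w] by simp
  have ny: "cmod (y$i) = cmod (w$i)" for i by (simp add: y_def norm_mult cl)
  have va: "v$a = 0" using ab wa by (simp add: v_def y_def axis_def)
  have vb: "v$b = of_real (1 - cmod (w$b))" using lb by (simp add: v_def y_def axis_def)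
  have vi: "i \<noteq> b \<Longrightarrow> v$i = - y$i" for i by (simp add: v_def axis_def)
  have tv: "t = 2 - 2 * cmod (w$b)"
  proof -
    have "t = (cmod (v$b))\<^sup>2 + (\<Sum>i\<in>UNIV - {b}. (cmod (v$i))\<^sup>2)"
      unfolding t_def by (rule sum.remove) auto
    also have "(\<Sum>i\<in>UNIV - {b}. (cmod (v$i))\<^sup>2) = (\<Sum>i\<in>UNIV - {b}. (cmod (w$i))\<^sup>2)"
      by (intro sum.cong refl) (simp add: vi ny)
    also have "\<dots> = 1 - (cmod (w$b))\<^sup>2"
      using sw sum.remove[of UNIV b "\<lambda>i. (cmod (w$i))\<^sup>2"] by simp
    also have "(cmod (v$b))\<^sup>2 = (1 - cmod (w$b))\<^sup>2"
      by (simp only: vb norm_of_real power2_abs)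
    finally show ?thesis by (simp add: power2_eq_square algebra_simps)
  qed
  have ssq: "(\<Sum>k\<in>UNIV. cnj (v$k) * v$k) = of_real t"
    unfolding t_def of_real_sum
  proof (intro sum.cong refl)
    fix k show "cnj (v$k) * v$k = complex_of_real ((cmod (v$k))\<^sup>2)"
      using complex_norm_square[of "v$k"] by (simp add: mult.commute)
  qed
  have cc2: "c * c * t = 2 * c" by (cases "t = 0") (simp_all add: c_def)
  have H: "cadj U = U" by (simp add: U_def cadj_def vec_eq_iff mult.commute)
  have "(U ** U)$i$j = (mat 1 :: complex^'n^'n)$i$j" for i j
  proof -
    have "(U ** U)$i$j = (\<Sum>k\<in>UNIV. ((if i = k then 1 else 0) - of_real c * v$i * cnj (v$k)) *
                               ((if k = j then 1 else 0) - of_real c * v$k * cnj (v$j)))"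
      by (simp add: U_def matrix_matrix_mult_def)
    also have "\<dots> = (\<Sum>k\<in>UNIV. (if i = k then 1 else 0) * (if k = j then 1 else 0))
        - (\<Sum>k\<in>UNIV. (if i = k then 1 else 0) * (of_real c * v$k * cnj (v$j)))
        - (\<Sum>k\<in>UNIV. (of_real c * v$i * cnj (v$k)) * (if k = j then 1 else 0))
        + (\<Sum>k\<in>UNIV. (of_real c * v$i * cnj (v$k)) * (of_real c * v$k * cnj (v$j)))"
      by (rule sum4)
    also have "(\<Sum>k\<in>UNIV. (if i = k then 1 else 0) * (if k = j then 1 else (0::complex))) = (if i = j then 1 else 0)"
    proof -
      have "(\<Sum>k\<in>UNIV. (if i = k then 1 else 0) * (if k = j then 1 else (0::complex))) =
            (\<Sum>k\<in>UNIV. if k = i then (if i = j then 1 else 0) else 0)"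
        by (intro sum.cong) auto
      then show ?thesis by simp
    qed
    also have "(\<Sum>k\<in>UNIV. (if i = k then 1 else 0) * (of_real c * v$k * cnj (v$j))) = of_real c * v$i * cnj (v$j)"
    proof -
      have "(\<Sum>k\<in>UNIV. (if i = k then 1 else 0) * (of_real c * v$k * cnj (v$j))) =
            (\<Sum>k\<in>UNIV. if k = i then of_real c * v$i * cnj (v$j) else 0)"
        by (intro sum.cong) auto
      then show ?thesis by simp
    qed
    also have "(\<Sum>k\<in>UNIV. (of_real c * v$i * cnj (v$k)) * (if k = j then 1 else 0)) = of_real c * v$i * cnj (v$j)"
    proof -
      have "(\<Sum>k\<in>UNIV. (of_real c * v$i * cnj (v$k)) * (if k = j then 1 else 0)) =
            (\<Sum>k\<in>UNIV. if k = j then of_real c * v$i * cnj (v$j) else 0)"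
        by (intro sum.cong) auto
      then show ?thesis by simp
    qed
    also have "(\<Sum>k\<in>UNIV. (of_real c * v$i * cnj (v$k)) * (of_real c * v$k * cnj (v$j))) =
        of_real (c * c) * v$i * cnj (v$j) * (\<Sum>k\<in>UNIV. cnj (v$k) * v$k)"
      by (simp add: sum_distrib_left mult_ac)
    also have "(if i = j then 1 else 0) - of_real c * v$i * cnj (v$j) - of_real c * v$i * cnj (v$j) +
        of_real (c * c) * v$i * cnj (v$j) * (\<Sum>k\<in>UNIV. cnj (v$k) * v$k) = (if i = j then 1 else 0)"
    proof -
      have e1: "of_real (c * c) * v$i * cnj (v$j) * (\<Sum>k\<in>UNIV. cnj (v$k) * v$k) =
          of_real (c * c * t) * (v$i * cnj (v$j))"
        unfolding ssq by (simp only: of_real_mult mult_ac)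
      have e2: "of_real c * v$i * cnj (v$j) = of_real c * (v$i * cnj (v$j))" by (simp only: mult.assoc)
      have e3: "complex_of_real (c * c * t) = 2 * of_real c"
        using arg_cong[OF cc2, of complex_of_real] by simp
      show ?thesis unfolding e1 e2 e3 by (simp add: algebra_simps)
    qed
    also have "\<dots> = (mat 1 :: complex^'n^'n)$i$j" by (simp add: mat_def)
    finally show ?thesis .
  qed
  then have UU: "U ** U = mat 1" by (simp add: vec_eq_iff)
  have Ua: "U *v axis a 1 = axis a 1"
    unfolding vec_eq_iff mat_axis by (simp add: U_def va axis_def)
  have Ub: "U$i$b = y$i" for i
  proof (cases "t = 0")
    case True
    then have "v$i = 0" for i
      unfolding t_def by (simp add: sum_nonneg_eq_0_iff)
    moreover have "y = axis b 1 - v" by (simp add: v_def)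
    ultimately have "y$i = (if i = b then 1 else 0)" by (simp add: axis_def)
    then show ?thesis using \<open>\<And>i. v$i = 0\<close> by (simp add: U_def)
  next
    case False
    have cv: "cnj (v$b) = of_real (1 - cmod (w$b))" using vb by simp
    have "c * (1 - cmod (w$b)) = 1" using False tv by (simp add: c_def field_simps)
    then have "of_real c * cnj (v$b) = 1" unfolding cv
      by (metis of_real_1 of_real_mult)
    moreover have "y$i = (if i = b then 1 else 0) - v$i" by (simp add: v_def axis_def)
    ultimately show ?thesis
      by (simp add: U_def)
  qed
  have Uw: "U *v (cnj l *s axis b 1) = w"
  proof -
    have "(U *v (cnj l *s axis b 1))$i = cnj l * U$i$b" for i
      by (simp add: matrix_vector_mult_def axis_def if_distrib if_distribR mult.commute cong: if_cong)
    then show ?thesis using Ub l1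
      by (simp add: vec_eq_iff y_def mult.assoc[symmetric]) (simp add: mult.commute)
  qed
  show ?thesis using that[OF H UU Ua Uw l1] .
qed

subsection \<open>The kernel argument\<close>

lemma cadj_outer: "cadj (outer x y) = outer y x"
  by (simp add: cadj_def outer_def vec_eq_iff)

lemma Osym_herm0:
  assumes "w$a = 0"
  shows "Osym (axis a 1) w \<in> herm0"
proof -
  have "cadj (Osym (axis a 1) w) = Osym (axis a 1) w"
    by (simp add: Osym_def cadj_add cadj_outer add.commute)
  moreover have "trace (Osym (axis a 1) w) = 0"
  proof -
    have "trace (Osym (axis a 1) w) = (\<Sum>i\<in>UNIV. if i = a then cnj (w$a) + w$a else 0)"
      unfolding trace_def by (intro sum.cong) (auto simp: Osym_def outer_def axis_def)
    then show ?thesis using assms by simp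
  qed
  ultimately show ?thesis by (simp add: herm0_def)
qed

lemma Osym_add: "Osym x (y + z) = Osym x y + Osym x z"
  by (simp add: Osym_def outer_def vec_eq_iff algebra_simps)

lemma Osym_scaleR: "Osym x (r *\<^sub>R y) = r *\<^sub>R Osym x y"
  by (simp add: Osym_def outer_def vec_eq_iff algebra_simps scaleR_conv_of_real[where 'a=complex])

lemma Oab_Osym: "a \<noteq> b \<Longrightarrow> Oab a b l = Osym (axis a 1) (cnj l *s axis b 1)"
  by (auto simp: Oab_def Osym_def outer_def mmat_def sw_def axis_def vec_eq_iff)

lemma Xm_outer: "Xm a = real CARD('n) *\<^sub>R outer (axis a 1) (axis a 1) - (mat 1 :: complex^'n::finite^'n)"
  by (auto simp: Xm_def dg_def mmat_def outer_def axis_def mat_def ind_def vec_eq_iff scaleR_conv_of_real[where 'a=complex])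

lemma mat_diff_ldistrib: "U ** (A - B) = U ** A - U ** (B::complex^'n::finite^'n)"
  by (simp add: matrix_matrix_mult_def vec_eq_iff sum_subtractf right_diff_distrib)

lemma mat_diff_rdistrib: "(A - B) ** U = A ** U - B ** (U::complex^'n::finite^'n)"
  by (simp add: matrix_matrix_mult_def vec_eq_iff sum_subtractf left_diff_distrib)

lemma Xm_conj:
  assumes "cadj U = U" "U ** U = mat 1" "U *v axis a 1 = axis a 1"
  shows "U ** Xm a ** U = Xm (a::'n::finite)"
proof -
  have "U ** Xm a ** U = real CARD('n) *\<^sub>R (U ** outer (axis a 1) (axis a 1) ** U) - U ** U"
    unfolding Xm_outer
    by (simp add: mat_diff_ldistrib mat_diff_rdistrib mat_scaleR_left mat_scaleR_right matrix_mul_assoc)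
  then show ?thesis using assms by (simp add: sandwich_outer Xm_outer)
qed

lemma no_kernel:
  fixes \<phi> :: "complex^'n::finite^'n \<Rightarrow> complex^'m::finite^'m"
  assumes adm: "adm \<phi>" and ev: "even CARD('n)" and n4: "4 \<le> CARD('n)"
    and sum1: "sum \<mu> UNIV = 1"
    and nu: "\<forall>x. Nn \<phi> j (Xm x) = ((real CARD('n) - 1)\<^sup>2 - 1) * \<mu> x + 1"
    and amax: "\<forall>x. \<mu> x \<le> \<mu> a"
    and wa: "w$a = 0" and T0: "Tc \<phi> j (Osym (axis a 1) w) = 0"
  shows "w = 0"
proof (rule ccontr)
  assume w0: "w \<noteq> 0"
  define n where "n = real CARD('n)"
  define K where "K = (n - 1)\<^sup>2 - 1"
  have Kpos: "K \<ge> n * (n - 2)" using n4 by (simp add: K_def n_def power2_eq_square algebra_simps)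
  define w' where "w' = (1 / norm w) *\<^sub>R w"
  have nw': "norm w' = 1" using w0 by (simp add: w'_def)
  have wa': "w'$a = 0" using wa by (simp add: w'_def)
  have "Osym (axis a 1) w' = (1 / norm w) *\<^sub>R Osym (axis a 1) w"
    by (simp add: w'_def Osym_scaleR)
  then have T0': "Tc \<phi> j (Osym (axis a 1) w') = 0"
    using T0 Tc_scaleR[OF adm Osym_herm0[OF wa]] by simp
  obtain b where ba: "b \<notin> {a}" using ex_not_in[of "{a}"] n4 by auto
  then have ab: "a \<noteq> b" by auto
  obtain U l where U: "cadj U = U" "U ** U = mat 1" "U *v axis a 1 = axis a 1"
    "U *v (cnj l *s axis b 1) = w'" "l * cnj l = 1"
    using householder[OF nw' wa' ab] by blast
  define \<psi> where "\<psi> = (\<lambda>A. \<phi> (U ** A ** U))"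
  have adm': "adm \<psi>" unfolding \<psi>_def by (rule adm_conj[OF adm U(1,2)])
  have TO: "Tc \<psi> j (Oab a b l) = 0"
    using T0' U by (simp add: \<psi>_def Tc_def Oab_Osym[OF ab] sandwich_Osym)
  have "card {a,b} = 2" using ab by simp
  then obtain r where r: "Bal {a,b} r" using Bal_exists[of "{a,b}"] ev n4 by auto
  have ccab: "cc \<psi> j a b = 0"
    using N_Oab[OF adm' ab r U(5), of j] TO by (simp add: Nn_def)
  obtain \<mu>' where mu': "\<forall>a b::'n. a \<noteq> b \<longrightarrow> cc \<psi> j a b = \<mu>' a + \<mu>' b"
      "\<forall>x. Nn \<psi> j (Xm x) = ((real CARD('n) - 1)\<^sup>2 - 1) * \<mu>' x + 1"
    using struct[OF adm' ev n4, of j] by blast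
  have "Nn \<psi> j (Xm a) = Nn \<phi> j (Xm a)"
    by (simp add: \<psi>_def Nn_def Tc_def Xm_conj[OF U(1-3)])
  then have "K * \<mu>' a = K * \<mu> a" using mu'(2) nu by (simp add: K_def n_def)
  moreover have n4r: "n \<ge> 4" using n4 by (simp add: n_def)
  moreover have "K > 0"
  proof -
    have "n - 2 \<ge> 2" using n4r by simp
    then have "n * (n - 2) \<ge> 4 * 2" using mult_mono[of 4 n 2 "n - 2"] n4r by simp
    then show ?thesis using Kpos by simp
  qed
  ultimately have ma: "\<mu>' a = \<mu> a" by simp
  have "\<mu>' b = - \<mu> a" using mu'(1) ccab ab ma by force
  moreover have "Nn \<psi> j (Xm b) \<ge> 0" by (simp add: Nn_def)
  ultimately have le: "K * \<mu> a \<le> 1" using mu'(2) by (simp add: K_def n_def)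
  have "1 \<le> n * \<mu> a"
  proof -
    have "sum \<mu> UNIV \<le> sum (\<lambda>_. \<mu> a) (UNIV::'n set)" using amax by (intro sum_mono) auto
    then show ?thesis using sum1 by (simp add: n_def)
  qed
  moreover have mu0: "\<mu> a \<ge> 0"
  proof (rule ccontr)
    assume "\<not> \<mu> a \<ge> 0"
    then have "n * \<mu> a < 0" using n4r by (simp add: mult_pos_neg)
    then show False using \<open>1 \<le> n * \<mu> a\<close> by simp
  qed
  have f1: "n * (n - 2) * \<mu> a \<le> K * \<mu> a" using Kpos mu0 by (rule mult_right_mono)
  have f2: "(n - 2) * 1 \<le> (n - 2) * (n * \<mu> a)"
    using \<open>1 \<le> n * \<mu> a\<close> n4r by (intro mult_left_mono) auto
  have eq: "(n - 2) * (n * \<mu> a) = n * (n - 2) * \<mu> a" by (simp only: mult_ac)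
  have "(n - 2) \<le> n * (n - 2) * \<mu> a" using f2 unfolding eq by simp
  then have "(n - 2) \<le> K * \<mu> a" using f1 by (rule order_trans)
  then show False using le n4r by simp
qed

definition Pa :: "'n::finite \<Rightarrow> complex^'n \<Rightarrow> complex^'n" where
  "Pa a w = (\<chi> i. if i = a then 0 else w$i)"

lemma dim_bound:
  fixes \<phi> :: "complex^'n::finite^'n \<Rightarrow> complex^'m::finite^'m"
  assumes adm: "adm \<phi>" and ev: "even CARD('n)" and n4: "4 \<le> CARD('n)"
  shows "CARD('n) \<le> CARD('m) + 1"
proof -
  obtain j :: 'm where True by simp
  obtain \<mu> where mu: "sum \<mu> UNIV = 1" "\<forall>x. Nn \<phi> j (Xm x) = ((real CARD('n) - 1)\<^sup>2 - 1) * \<mu> x + 1"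
    using struct[OF adm ev n4, of j] by blast
  obtain a where amax: "\<forall>x. \<mu> x \<le> \<mu> a"
  proof -
    have "Max (range \<mu>) \<in> range \<mu>" by (rule Max_in) auto
    then obtain a where a: "\<mu> a = Max (range \<mu>)" by (metis rangeE)
    have ge: "\<mu> x \<le> Max (range \<mu>)" for x by (rule Max_ge) auto
    show ?thesis by (rule that[of a]) (use a ge in auto)
  qed
  define L where "L w = (Tc \<phi> j (Osym (axis a 1) (Pa a w)), w$a)" for w
  have Pa0: "(Pa a w)$a = 0" for w by (simp add: Pa_def)
  have Padd: "Pa a (x + y) = Pa a x + Pa a y" for x y by (simp add: Pa_def vec_eq_iff)
  have Pscale: "Pa a (c *\<^sub>R x) = c *\<^sub>R Pa a x" for c x by (simp add: Pa_def vec_eq_iff)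
  have lin: "linear L"
  proof (rule linearI)
    fix x y :: "complex^'n"
    show "L (x + y) = L x + L y"
      unfolding L_def Padd Osym_add
      using Tc_add[OF adm Osym_herm0[OF Pa0] Osym_herm0[OF Pa0]] by simp
  next
    fix c :: real and x :: "complex^'n"
    show "L (c *\<^sub>R x) = c *\<^sub>R L x"
      unfolding L_def Pscale Osym_scaleR
      using Tc_scaleR[OF adm Osym_herm0[OF Pa0]] by simp
  qed
  have "inj L"
    unfolding linear_injective_0[OF lin]
  proof (intro allI impI)
    fix w assume "L w = 0"
    then have wa: "w$a = 0" and T: "Tc \<phi> j (Osym (axis a 1) (Pa a w)) = 0"
      by (auto simp: L_def zero_prod_def)
    have "Pa a w = w" using wa by (auto simp: Pa_def vec_eq_iff)
    then show "w = 0"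
      using no_kernel[OF adm ev n4 mu(1) mu(2) amax wa] T by simp
  qed
  then have "dim (L ` UNIV) = dim (UNIV :: (complex^'n) set)"
    using lin by (intro dim_image_eq) (auto intro: inj_on_subset)
  moreover have "dim (L ` UNIV) \<le> DIM((complex^'m) \<times> complex)"
    by (rule dim_subset_UNIV)
  ultimately have "DIM(complex^'n) \<le> DIM((complex^'m) \<times> complex)"
    by (simp add: dim_UNIV)
  then show ?thesis by simp
qed

subsection \<open>Parity of m\<close>

lemma mmat_uminus: "mmat p (\<lambda>i. - w i) = - mmat p w"
  by (simp add: mmat_def vec_eq_iff)

lemma anticomm_rel:
  fixes \<phi> :: "complex^'n::finite^'n \<Rightarrow> complex^'m::finite^'m"
  assumes adm: "adm \<phi>" and A: "A \<in> iherm0" and B: "B \<in> iherm0" and ac: "A ** B = - (B ** A)"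
  shows "\<phi> A ** cadj (\<phi> B) + \<phi> B ** cadj (\<phi> A) = 0"
    "cadj (\<phi> A) ** \<phi> B + cadj (\<phi> B) ** \<phi> A = 0"
proof -
  have Ah: "A \<in> herm0" "cadj A = A" "A ** A = mat 1" using A by (auto simp: iherm0_def herm0_def unitary_mats_def)
  have Bh: "B \<in> herm0" "cadj B = B" "B ** B = mat 1" using B by (auto simp: iherm0_def herm0_def unitary_mats_def)
  define r where "r = 1 / sqrt 2"
  have r2: "r * r = 1 / 2" by (simp add: r_def)
  define C where "C = r *\<^sub>R (A + B)"
  have Cherm: "C \<in> herm0" unfolding C_def by (intro herm0_scaleR herm0_add Ah Bh)
  have cC: "cadj C = C" using Cherm by (simp add: herm0_def)
  have CC: "C ** C = mat 1"
  proof -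
    have "C ** C = (r * r) *\<^sub>R ((A + B) ** (A + B))"
      by (simp add: C_def mat_scaleR_left mat_scaleR_right)
    also have "(A + B) ** (A + B) = A ** A + A ** B + B ** A + B ** B"
      by (simp add: matrix_add_ldistrib mat_add_rdistrib)
    also have "\<dots> = 2 *\<^sub>R mat 1" using Ah Bh ac by (simp add: scaleR_2)
    finally show ?thesis using r2 by simp
  qed
  have "C \<in> iherm0" using Cherm cC CC by (simp add: iherm0_def unitary_mats_def)
  then have uC: "\<phi> C ** cadj (\<phi> C) = mat 1" "cadj (\<phi> C) ** \<phi> C = mat 1"
    using adm_unitary[OF adm] by (auto simp: unitary_mats_def)
  let ?U = "\<phi> A" and ?V = "\<phi> B"
  have uA: "?U ** cadj ?U = mat 1" "cadj ?U ** ?U = mat 1" using adm_unitary[OF adm A] by (auto simp: unitary_mats_def)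
  have uB: "?V ** cadj ?V = mat 1" "cadj ?V ** ?V = mat 1" using adm_unitary[OF adm B] by (auto simp: unitary_mats_def)
  have phiC: "\<phi> C = r *\<^sub>R (?U + ?V)"
    unfolding C_def using adm_scaleR[OF adm herm0_add[OF Ah(1) Bh(1)]] adm_add[OF adm Ah(1) Bh(1)] by simp
  have "\<phi> C ** cadj (\<phi> C) = (r * r) *\<^sub>R ((?U + ?V) ** cadj (?U + ?V))"
    by (simp add: phiC cadj_scaleR mat_scaleR_left mat_scaleR_right)
  also have "(?U + ?V) ** cadj (?U + ?V) = ?U ** cadj ?U + ?V ** cadj ?V + (?U ** cadj ?V + ?V ** cadj ?U)"
    by (simp add: cadj_add matrix_add_ldistrib mat_add_rdistrib algebra_simps)
  finally have "(1/2) *\<^sub>R (2 *\<^sub>R mat 1 + (?U ** cadj ?V + ?V ** cadj ?U)) = mat 1"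
    using uC uA uB r2 by (simp add: scaleR_2)
  then have "2 *\<^sub>R ((1/2) *\<^sub>R (2 *\<^sub>R mat 1 + (?U ** cadj ?V + ?V ** cadj ?U))) = 2 *\<^sub>R mat 1"
    by simp
  then show "?U ** cadj ?V + ?V ** cadj ?U = 0"
    by (simp only: scaleR_scaleR) simp
  have "cadj (\<phi> C) ** \<phi> C = (r * r) *\<^sub>R (cadj (?U + ?V) ** (?U + ?V))"
    by (simp add: phiC cadj_scaleR mat_scaleR_left mat_scaleR_right)
  also have "cadj (?U + ?V) ** (?U + ?V) = cadj ?U ** ?U + cadj ?V ** ?V + (cadj ?U ** ?V + cadj ?V ** ?U)"
    by (simp add: cadj_add matrix_add_ldistrib mat_add_rdistrib algebra_simps)
  finally have "(1/2) *\<^sub>R (2 *\<^sub>R mat 1 + (cadj ?U ** ?V + cadj ?V ** ?U)) = mat 1"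
    using uC uA uB r2 by (simp add: scaleR_2)
  then have "2 *\<^sub>R ((1/2) *\<^sub>R (2 *\<^sub>R mat 1 + (cadj ?U ** ?V + cadj ?V ** ?U))) = 2 *\<^sub>R mat 1"
    by simp
  then show "cadj ?U ** ?V + cadj ?V ** ?U = 0"
    by (simp only: scaleR_scaleR) simp
qed

lemma three_anti:
  assumes ev: "even CARD('n::finite)"
  obtains A1 A2 A3 :: "complex^'n^'n" where "A1 \<in> iherm0" "A2 \<in> iherm0" "A3 \<in> iherm0"
    "A1 ** A2 = - (A2 ** A1)" "A1 ** A3 = - (A3 ** A1)" "A2 ** A3 = - (A3 ** A2)"
proof -
  obtain H :: "'n set" where H: "card H = CARD('n) div 2"
    using obtain_subset_with_card_n[of "CARD('n) div 2" "UNIV::'n set"] by auto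
  let ?C = "UNIV - H"
  have cC: "card ?C = CARD('n) div 2" using H ev by (simp add: card_Diff_subset) presburger
  obtain g where g: "bij_betw g H ?C"
    using finite_same_card_bij[of H ?C] H cC by auto
  define p where "p x = (if x \<in> H then g x else inv_into H g x)" for x
  have gC: "x \<in> H \<Longrightarrow> g x \<notin> H" for x using g by (auto simp: bij_betw_def)
  have iH: "x \<notin> H \<Longrightarrow> inv_into H g x \<in> H" for x
    using g by (metis Diff_iff UNIV_I bij_betw_def inv_into_into)
  have pH: "p x \<in> H \<longleftrightarrow> x \<notin> H" for x
    using gC iH by (auto simp: p_def)
  have pp: "p (p x) = x" for x
  proof (cases "x \<in> H")
    case True
    then show ?thesis using gC g by (simp add: p_def bij_betw_def)
  next
    case False
    then have "x \<in> g ` H" using g by (auto simp: bij_betw_def)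
    then show ?thesis using False iH by (simp add: p_def f_inv_into_f)
  qed
  have pne: "p i \<noteq> i" for i using pH by metis
  define w2 where "w2 x = (if x \<in> H then \<i> else - \<i>)" for x
  define s3 where "s3 x = (if x \<in> H then 1 else - 1 :: complex)" for x
  have w2p: "w2 (p i) = - w2 i" for i using pH[of i] by (auto simp: w2_def)
  have s3p: "s3 (p i) = - s3 i" for i using pH[of i] by (auto simp: s3_def)
  have pp': "p \<circ> p = id" using pp by auto
  have A1: "mmat p (\<lambda>_. 1) \<in> iherm0"
    by (rule mmat_iherm0) (use pp pne in auto)
  have A2: "mmat p w2 \<in> iherm0"
    by (rule mmat_iherm0) (use pp pne pH in \<open>auto simp: w2_def\<close>)
  have A3: "mmat id s3 \<in> iherm0"
  proof (rule mmat_iherm0)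
    have "(\<Sum>i\<in>UNIV. s3 i) = of_nat (card H) - of_nat (card ?C)"
      by (simp add: s3_def sum.If_cases Int_def set_diff_eq)
    then show "(\<Sum>i\<in>UNIV. if id i = i then s3 i else 0) = 0" using H cC by simp
  qed (auto simp: s3_def)
  have "mmat p (\<lambda>_. 1) ** mmat p w2 = - (mmat p w2 ** mmat p (\<lambda>_. 1))"
    by (simp add: mmat_mult w2p flip: mmat_uminus)
  moreover have "mmat p (\<lambda>_. 1) ** mmat id s3 = - (mmat id s3 ** mmat p (\<lambda>_. 1))"
    by (simp add: mmat_mult s3p flip: mmat_uminus)
  moreover have "mmat p w2 ** mmat id s3 = - (mmat id s3 ** mmat p w2)"
    by (simp add: mmat_mult s3p mult.commute flip: mmat_uminus)
  ultimately show ?thesis using that A1 A2 A3 by blast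
qed

lemma det_uminus: "det (- X :: complex^'m::finite^'m) = (-1) ^ CARD('m) * det X"
proof -
  have "- X = (\<chi> i. (-1) *s X$i)" by (simp add: vec_eq_iff)
  then have "det (- X) = prod (\<lambda>_. -1) (UNIV::'m set) * det (\<chi> i. X$i)"
    using det_rows_mul[of "\<lambda>_. -1" "\<lambda>i. X$i"] by simp
  then show ?thesis by simp
qed

lemma mat_uminus_left: "(- X) ** Y = - (X ** (Y::complex^'m::finite^'m))"
  by (simp add: matrix_matrix_mult_def vec_eq_iff sum_negf)
lemma mat_uminus_right: "X ** (- Y) = - (X ** (Y::complex^'m::finite^'m))"
  by (simp add: matrix_matrix_mult_def vec_eq_iff sum_negf)

lemma det_nz: "cadj U ** U = mat 1 \<Longrightarrow> det (U::complex^'m::finite^'m) \<noteq> 0"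
  by (metis det_I det_mul mult_zero_right zero_neq_one)
lemma det_cadj_nz: "cadj U ** U = mat 1 \<Longrightarrow> det (cadj U::complex^'m::finite^'m) \<noteq> 0"
  by (metis det_I det_mul mult_zero_left zero_neq_one)

lemma even_m:
  fixes \<phi> :: "complex^'n::finite^'n \<Rightarrow> complex^'m::finite^'m"
  assumes adm: "adm \<phi>" and ev: "even CARD('n)"
  shows "even CARD('m)"
proof -
  obtain A1 A2 A3 :: "complex^'n^'n" where A: "A1 \<in> iherm0" "A2 \<in> iherm0" "A3 \<in> iherm0"
    "A1 ** A2 = - (A2 ** A1)" "A1 ** A3 = - (A3 ** A1)" "A2 ** A3 = - (A3 ** A2)"
    using three_anti[OF ev] by blast
  define U1 where "U1 = \<phi> A1"
  define U2 where "U2 = \<phi> A2"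
  define U3 where "U3 = \<phi> A3"
  have u1: "cadj U1 ** U1 = mat 1" using adm_unitary[OF adm A(1)] by (simp add: U1_def unitary_mats_def)
  have u2: "cadj U2 ** U2 = mat 1" using adm_unitary[OF adm A(2)] by (simp add: U2_def unitary_mats_def)
  have u3: "cadj U3 ** U3 = mat 1" using adm_unitary[OF adm A(3)] by (simp add: U3_def unitary_mats_def)
  have r12: "U2 ** cadj U1 = - (U1 ** cadj U2)"
    using anticomm_rel(1)[OF adm A(1,2,4)] by (simp add: U1_def U2_def eq_neg_iff_add_eq_0 add.commute)
  have r13: "U3 ** cadj U1 = - (U1 ** cadj U3)"
    using anticomm_rel(1)[OF adm A(1,3,5)] by (simp add: U1_def U3_def eq_neg_iff_add_eq_0 add.commute)
  have r23: "cadj U2 ** U3 = - (cadj U3 ** U2)"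
    using anticomm_rel(2)[OF adm A(2,3,6)] by (simp add: U2_def U3_def eq_neg_iff_add_eq_0)
  define W2 where "W2 = cadj U1 ** U2"
  define W3 where "W3 = cadj U1 ** U3"
  have "W2 ** W3 = cadj U1 ** (U2 ** cadj U1) ** U3" by (simp add: W2_def W3_def matrix_mul_assoc)
  also have "\<dots> = - (cadj U2 ** U3)"
    by (simp add: r12 mat_uminus_left mat_uminus_right matrix_mul_assoc u1)
  finally have e1: "W2 ** W3 = - (cadj U2 ** U3)" .
  have "W3 ** W2 = cadj U1 ** (U3 ** cadj U1) ** U2" by (simp add: W2_def W3_def matrix_mul_assoc)
  also have "\<dots> = - (cadj U3 ** U2)"
    by (simp add: r13 mat_uminus_left mat_uminus_right matrix_mul_assoc u1)
  finally have e2: "W3 ** W2 = - (cadj U3 ** U2)" .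
  have anti: "W2 ** W3 = - (W3 ** W2)" using e1 e2 r23 by simp
  have nz: "det (W2 ** W3) \<noteq> 0"
    using det_nz[OF u2] det_nz[OF u3] det_cadj_nz[OF u1] by (simp add: W2_def W3_def det_mul)
  have "det (W2 ** W3) = det (- (W3 ** W2))" using anti by (rule arg_cong)
  also have "\<dots> = (-1) ^ CARD('m) * det (W3 ** W2)" by (rule det_uminus)
  also have "det (W3 ** W2) = det (W2 ** W3)" by (simp add: det_mul mult.commute)
  finally have "det (W2 ** W3) = (-1) ^ CARD('m) * det (W2 ** W3)" .
  then have "(-1::complex) ^ CARD('m) = 1" using nz by simp
  then show ?thesis by (metis neg_one_odd_power one_neq_neg_one)
qed

theorem proposition3p11:
  fixes \<phi> :: "complex^'n::finite^'n \<Rightarrow> complex^'m::finite^'m"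
  assumes "even CARD('n)"
    and "real_linear_on_herm0 \<phi>"
    and "\<phi> ` (iherm0 :: (complex^'n^'n) set) \<subseteq> (unitary_mats :: (complex^'m^'m) set)"
  shows "CARD('m) \<ge> CARD('n)"
proof -
  have adm: "adm \<phi>" using assms(2,3) by (simp add: adm_def)
  have em: "even CARD('m)" by (rule even_m[OF adm assms(1)])
  show ?thesis
  proof (cases "4 \<le> CARD('n)")
    case True
    have "CARD('n) \<le> CARD('m) + 1" by (rule dim_bound[OF adm assms(1) True])
    then show ?thesis using em assms(1) by presburger
  next
    case False
    have "CARD('n) \<noteq> 0" by simp
    then have "CARD('n) = 2" using False assms(1) by presburger
    moreover have "CARD('m) \<noteq> 0" by simp
    ultimately show ?thesis using em by presburger
  qed
qed

end
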